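(* Let $\mathcal T\subseteq 2^X$ be closed under taking supersets. Then $DM_{\mathcal T}(X)$ has finite rank over $\mathbb{Z}$ if and only if $\mathcal T$ contains all the cocircuits of $X$; and $D_{\mathcal T}(X)$ has finite dimension over $\mathbb{R}$ if and only if $\mathcal T$ contains all the cocircuits of $X$.
   Context: $\Gamma\cong\mathbb{Z}^d$ is a lattice, $V=\Gamma\otimes\mathbb{R}$, $X$ a finite list of nonzero elements of $\Gamma$ spanning $V$. A cocircuit is the sublist of elements of $X$ not lying in a hyperplane of $V$ spanned by elements of $X$. $\mathcal C[\Gamma]$ is the set of $\mathbb{Z}$-valued functions on $\Gamma$; $\nabla_af(x)=f(x)-f(x-a)$ and $\nabla_A=\prod_{a\in A}\nabla_a$. $DM_{\mathcal T}(X)=\{f\in\mathcal C[\Gamma]:\nabla_Af=0\ \forall A\in\mathcal T\}$; $D_{\mathcal T}(X)=\{f:V\to\mathbb{R}\text{ smooth}:\partial_Af=0\ \forall A\in\mathcal T\}$ with $\partial_A=\prod_{a\in A}\partial_a$ the product of directional derivatives. *)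

theory Defs
  imports "HOL-Analysis.Analysis"
begin

text \<open>The lattice \<Gamma> = \<int>^d is modelled as int^'d, V = \<Gamma> \<otimes> \<real> as real^'d.
  The list X is a list of lattice vectors; sublists of X are index sets
  A \<subseteq> {..<length X}.\<close>

definition to_real :: "int ^ 'd \<Rightarrow> real ^ 'd" where
  "to_real v = (\<chi> j. of_int (v $ j))"

definition spanned_hyperplane :: "(int ^ 'd) list \<Rightarrow> (real ^ 'd) set \<Rightarrow> bool" where
  "spanned_hyperplane X H \<longleftrightarrow>
     (\<exists>S \<subseteq> to_real ` set X. H = span S) \<and> dim H = CARD('d) - 1"

definition cocircuits :: "(int ^ 'd) list \<Rightarrow> nat set set" where
  "cocircuits X = {{i. i < length X \<and> to_real (X ! i) \<notin> H} | H. spanned_hyperplane X H}"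

definition nabla :: "int ^ 'd \<Rightarrow> (int ^ 'd \<Rightarrow> int) \<Rightarrow> (int ^ 'd \<Rightarrow> int)" where
  "nabla a f = (\<lambda>x. f x - f (x - a))"

definition nabla_set :: "(int ^ 'd) list \<Rightarrow> nat set \<Rightarrow> (int ^ 'd \<Rightarrow> int) \<Rightarrow> (int ^ 'd \<Rightarrow> int)" where
  "nabla_set X A f = foldr (\<lambda>i g. nabla (X ! i) g) (sorted_list_of_set A) f"

definition DM :: "(int ^ 'd) list \<Rightarrow> nat set set \<Rightarrow> (int ^ 'd \<Rightarrow> int) set" where
  "DM X T = {f. \<forall>A\<in>T. nabla_set X A f = (\<lambda>_. 0)}"

definition dderiv :: "real ^ 'd \<Rightarrow> (real ^ 'd \<Rightarrow> real) \<Rightarrow> (real ^ 'd \<Rightarrow> real)" where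
  "dderiv a f = (\<lambda>x. frechet_derivative f (at x) a)"

primrec dderivs :: "(real ^ 'd) list \<Rightarrow> (real ^ 'd \<Rightarrow> real) \<Rightarrow> (real ^ 'd \<Rightarrow> real)" where
  "dderivs [] f = f"
| "dderivs (a # as) f = dderiv a (dderivs as f)"

definition smooth :: "(real ^ 'd \<Rightarrow> real) \<Rightarrow> bool" where
  "smooth f \<longleftrightarrow> (\<forall>as x. dderivs as f differentiable (at x))"

definition partial_set :: "(int ^ 'd) list \<Rightarrow> nat set \<Rightarrow> (real ^ 'd \<Rightarrow> real) \<Rightarrow> (real ^ 'd \<Rightarrow> real)" where
  "partial_set X A f = dderivs (map (\<lambda>i. to_real (X ! i)) (sorted_list_of_set A)) f"

definition Dsp :: "(int ^ 'd) list \<Rightarrow> nat set set \<Rightarrow> (real ^ 'd \<Rightarrow> real) set" where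
  "Dsp X T = {f. smooth f \<and> (\<forall>A\<in>T. partial_set X A f = (\<lambda>_. 0))}"

definition lin_indep_fun :: "('a \<Rightarrow> 'b::comm_ring) list \<Rightarrow> bool" where
  "lin_indep_fun fs \<longleftrightarrow>
     (\<forall>c :: nat \<Rightarrow> 'b. (\<forall>x. (\<Sum>i<length fs. c i * (fs ! i) x) = 0) \<longrightarrow> (\<forall>i<length fs. c i = 0))"

definition finite_rank :: "('a \<Rightarrow> 'b::comm_ring) set \<Rightarrow> bool" where
  "finite_rank M \<longleftrightarrow> (\<exists>n. \<forall>fs. set fs \<subseteq> M \<and> lin_indep_fun fs \<longrightarrow> length fs \<le> n)"

end

theory Submission
  imports Defs "HOL-Computational_Algebra.Polynomial"
begin



lemma elim_rel:
  fixes F :: "'i \<Rightarrow> 'a \<Rightarrow> 'b::idom"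
  assumes "finite S" "finite I" "card S < card I"
  shows "\<exists>c. (\<exists>i\<in>I. c i \<noteq> 0) \<and> (\<forall>x\<in>S. (\<Sum>i\<in>I. c i * F i x) = 0)"
  using assms
proof (induction S arbitrary: I F rule: finite_induct)
  case empty
  then obtain i where "i \<in> I" by fastforce
  then show ?case by (rule_tac x="\<lambda>_. 1" in exI) auto
next
  case (insert s S)
  show ?case
  proof (cases "\<forall>i\<in>I. F i s = 0")
    case True
    have "card S < card I" using insert by auto
    then obtain c where c: "\<exists>i\<in>I. c i \<noteq> 0" "\<forall>x\<in>S. (\<Sum>i\<in>I. c i * F i x) = 0"
      using insert.IH[OF insert.prems(1)] by blast
    show ?thesis using c True by (rule_tac x=c in exI) auto
  next
    case False
    then obtain j where j: "j \<in> I" "F j s \<noteq> 0" by blast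
    define I' where "I' = I - {j}"
    define G where "G = (\<lambda>i x. F j s * F i x - F i s * F j x)"
    have cI: "card S < card I'" using insert j unfolding I'_def by auto
    obtain d where d: "\<exists>i\<in>I'. d i \<noteq> 0" "\<forall>x\<in>S. (\<Sum>i\<in>I'. d i * G i x) = 0"
      using insert.IH[OF _ cI, of G] insert.prems unfolding I'_def by auto
    define c where "c = (\<lambda>i. if i = j then - (\<Sum>i'\<in>I'. d i' * F i' s) else d i * F j s)"
    have Isplit: "I = insert j I'" "j \<notin> I'" "finite I'" using j insert.prems unfolding I'_def by auto
    have key: "(\<Sum>i\<in>I. c i * F i x) = (\<Sum>i\<in>I'. d i * G i x)" for x
    proof -
      have "(\<Sum>i\<in>I. c i * F i x) = c j * F j x + (\<Sum>i\<in>I'. c i * F i x)"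
        using Isplit by simp
      also have "(\<Sum>i\<in>I'. c i * F i x) = (\<Sum>i\<in>I'. d i * F j s * F i x)"
        using Isplit by (intro sum.cong) (auto simp: c_def)
      also have "c j * F j x = - (\<Sum>i\<in>I'. d i * F i s * F j x)"
        by (simp add: c_def sum_distrib_right)
      finally have "(\<Sum>i\<in>I. c i * F i x) = (\<Sum>i\<in>I'. d i * F j s * F i x) - (\<Sum>i\<in>I'. d i * F i s * F j x)"
        by (simp add: sum_negf)
      also have "\<dots> = (\<Sum>i\<in>I'. d i * F j s * F i x - d i * F i s * F j x)"
        by (simp add: sum_subtractf)
      finally show ?thesis by (simp add: G_def algebra_simps)
    qed
    have "\<forall>x\<in>insert s S. (\<Sum>i\<in>I. c i * F i x) = 0"
      using d(2) key by (auto simp: G_def)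
    moreover have "\<exists>i\<in>I. c i \<noteq> 0"
      using d(1) j Isplit by (auto simp: c_def)
    ultimately show ?thesis by blast
  qed
qed

lemma finite_rank_by_data:
  fixes M :: "('a \<Rightarrow> 'b::idom) set"
  assumes "finite S"
    and det: "\<And>fs c. set fs \<subseteq> M \<Longrightarrow> (\<forall>x\<in>S. (\<Sum>i<length fs. c i * (fs!i) x) = 0)
               \<Longrightarrow> (\<forall>x. (\<Sum>i<length fs. c i * (fs!i) x) = 0)"
  shows "finite_rank M"
  unfolding finite_rank_def
proof (intro exI allI impI)
  fix fs assume H: "set fs \<subseteq> M \<and> lin_indep_fun fs"
  show "length fs \<le> card S"
  proof (rule ccontr)
    assume "\<not> length fs \<le> card S"
    then have "card S < card {..<length fs}" by simp
    from elim_rel[OF assms(1) _ this, of "\<lambda>i. fs!i"] obtain c where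
      c: "\<exists>i\<in>{..<length fs}. c i \<noteq> 0" "\<forall>x\<in>S. (\<Sum>i<length fs. c i * (fs!i) x) = 0" by auto
    from det[OF _ c(2)] H have "\<forall>x. (\<Sum>i<length fs. c i * (fs!i) x) = 0" by blast
    with H have "\<forall>i<length fs. c i = 0" unfolding lin_indep_fun_def by blast
    with c(1) show False by auto
  qed
qed

lemma not_finite_rank:
  assumes "\<And>n. \<exists>fs. set fs \<subseteq> M \<and> lin_indep_fun fs \<and> length fs = n"
  shows "\<not> finite_rank M"
  unfolding finite_rank_def
proof
  assume "\<exists>n. \<forall>fs. set fs \<subseteq> M \<and> lin_indep_fun fs \<longrightarrow> length fs \<le> n"
  then obtain n where n: "\<forall>fs. set fs \<subseteq> M \<and> lin_indep_fun fs \<longrightarrow> length fs \<le> n" by blast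
  obtain fs where "set fs \<subseteq> M \<and> lin_indep_fun fs \<and> length fs = Suc n" using assms by blast
  with n show False by fastforce
qed




lemma nabla_commute: "nabla a (nabla b g) = nabla b (nabla a g)"
  by (auto simp: nabla_def fun_eq_iff algebra_simps)

lemma nabla_zero[simp]: "nabla a (\<lambda>_. 0) = (\<lambda>_. 0)"
  by (simp add: nabla_def)

lemma foldr_nabla_commute: "foldr nabla us (nabla a g) = nabla a (foldr nabla us g)"
  by (induction us) (auto simp: nabla_commute)

lemma foldr_nabla_zero: "foldr nabla us (\<lambda>_. 0) = (\<lambda>_. 0)"
  by (induction us) auto

lemma cfc_nabla: "comp_fun_commute (\<lambda>i g. nabla (X ! i) g)"
  by unfold_locales (auto simp: fun_eq_iff nabla_commute[unfolded fun_eq_iff])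

lemma nabla_set_fold:
  assumes "finite A"
  shows "nabla_set X A f = Finite_Set.fold (\<lambda>i g. nabla (X ! i) g) f A"
proof -
  interpret comp_fun_commute "\<lambda>i g. nabla (X ! i) g" by (rule cfc_nabla)
  have "Finite_Set.fold (\<lambda>i g. nabla (X ! i) g) f (set (rev (sorted_list_of_set A)))
        = fold (\<lambda>i g. nabla (X ! i) g) (remdups (rev (sorted_list_of_set A))) f"
    by (rule fold_set_fold_remdups)
  then show ?thesis using assms
    by (simp add: nabla_set_def foldr_conv_fold distinct_remdups_id)
qed

lemma nabla_set_empty[simp]: "nabla_set X {} f = f"
  by (simp add: nabla_set_def)

lemma nabla_set_insert:
  assumes "finite S" "b \<notin> S"
  shows "nabla_set X (insert b S) f = nabla (X ! b) (nabla_set X S f)"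
proof -
  interpret comp_fun_commute "\<lambda>i g. nabla (X ! i) g" by (rule cfc_nabla)
  show ?thesis using assms by (simp add: nabla_set_fold)
qed

fun good :: "nat set set \<Rightarrow> nat set list \<Rightarrow> nat set \<Rightarrow> bool" where
  "good T [] S = (S \<in> T)"
| "good T (B # Bs) S = (\<forall>b\<in>B. good T Bs (insert b S))"

lemma disc_good:
  fixes X :: "(int ^ 'd) list" and f :: "int ^ 'd \<Rightarrow> int"
  assumes f: "\<forall>A\<in>T. nabla_set X A f = (\<lambda>_. 0)"
  shows "good T Bs S \<Longrightarrow> finite S \<Longrightarrow> length us = length Bs \<Longrightarrow>
    (\<forall>i<length Bs. \<forall>h::int^'d\<Rightarrow>int. (\<forall>b\<in>Bs!i. \<forall>x. h (x - X!b) = h x) \<longrightarrow> (\<forall>x. h (x - us!i) = h x)) \<Longrightarrow>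
    foldr nabla us (nabla_set X S f) = (\<lambda>_. 0)"
proof (induction Bs arbitrary: us S)
  case Nil
  then show ?case using f by simp
next
  case (Cons B Bs)
  then obtain u us' where us: "us = u # us'" by (cases us) auto
  define h where "h = foldr nabla us' (nabla_set X S f)"
  have inv: "\<forall>b\<in>B. \<forall>x. h (x - X!b) = h x"
  proof (intro ballI allI)
    fix b x assume b: "b \<in> B"
    have g: "good T Bs (insert b S)" using Cons.prems(1) b by simp
    have P3: "\<forall>i<length Bs. \<forall>h::int^'d\<Rightarrow>int. (\<forall>b\<in>Bs!i. \<forall>x. h (x - X!b) = h x) \<longrightarrow> (\<forall>x. h (x - us'!i) = h x)"
    proof (intro allI impI)
      fix i and h :: "int ^ 'd \<Rightarrow> int" and x assume "i < length Bs" "\<forall>b\<in>Bs!i. \<forall>x. h (x - X!b) = h x"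
      then show "h (x - us'!i) = h x" using Cons.prems(4)[rule_format, of "Suc i" h] us by auto
    qed
    have IH: "foldr nabla us' (nabla_set X (insert b S) f) = (\<lambda>_. 0)"
      apply (rule Cons.IH[OF g])
      using Cons.prems us P3 by auto
    show "h (x - X!b) = h x"
    proof (cases "b \<in> S")
      case True
      then have "h = (\<lambda>_. 0)" using IH by (simp add: h_def insert_absorb)
      then show ?thesis by simp
    next
      case False
      then have "nabla (X!b) h = (\<lambda>_. 0)" using IH Cons.prems(2)
        by (simp add: h_def nabla_set_insert foldr_nabla_commute)
      then show ?thesis by (auto simp: nabla_def fun_eq_iff)
    qed
  qed
  have "\<forall>x. h (x - u) = h x"
    using Cons.prems(4)[rule_format, of 0] inv us by auto
  then have "nabla u h = (\<lambda>_. 0)" by (simp add: nabla_def)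
  then show ?case by (simp add: us h_def)
qed

lemma nabla_rep_commute:
  "foldr nabla (replicate r w) (nabla w h) = nabla w (foldr nabla (replicate r w) h)"
  by (rule foldr_nabla_commute)

lemma rec1:
  fixes w x0 :: "int ^ 'd"
  shows "foldr nabla (replicate r w) h = (\<lambda>_. 0) \<Longrightarrow> (\<forall>i<r. h (x0 + of_nat i *s w) = 0)
    \<Longrightarrow> h (x0 + n *s w) = 0"
proof (induction r arbitrary: h x0 n)
  case 0
  then show ?case by simp
next
  case (Suc r)
  define g where "g = nabla w h"
  have "foldr nabla (replicate r w) g = nabla w (foldr nabla (replicate r w) h)"
    by (simp only: g_def foldr_nabla_commute)
  also have "\<dots> = foldr nabla (replicate (Suc r) w) h"
    by (simp only: replicate_Suc foldr_Cons o_apply)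
  finally have g0: "foldr nabla (replicate r w) g = (\<lambda>_. 0)"
    using Suc.prems(1) by simp
  have gv: "\<forall>i<r. g ((x0 + w) + of_nat i *s w) = 0"
  proof (intro allI impI)
    fix i assume "i < r"
    then have "h (x0 + of_nat (Suc i) *s w) = 0" "h (x0 + of_nat i *s w) = 0"
      using Suc.prems(2) by auto
    moreover have "x0 + of_nat (Suc i) *s w = (x0 + w) + of_nat i *s w"
      by (simp add: vec_eq_iff algebra_simps)
    moreover have "(x0 + w) + of_nat i *s w - w = x0 + of_nat i *s w"
      by (simp add: vec_eq_iff algebra_simps)
    ultimately show "g ((x0 + w) + of_nat i *s w) = 0"
      by (simp add: g_def nabla_def add.assoc)
  qed
  have gall: "g (x0 + m *s w) = 0" for m
  proof -
    have "g ((x0 + w) + (m - 1) *s w) = 0" using Suc.IH[OF g0 gv] .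
    moreover have "(x0 + w) + (m - 1) *s w = x0 + m *s w"
      by (simp add: vec_eq_iff algebra_simps)
    ultimately show ?thesis by simp
  qed
  have step: "h (x0 + m *s w) = h (x0 + (m - 1) *s w)" for m
  proof -
    have "x0 + m *s w - w = x0 + (m - 1) *s w"
      by (simp add: vec_eq_iff algebra_simps)
    with gall[of m] show ?thesis by (simp add: g_def nabla_def)
  qed
  have h0: "h (x0 + 0 *s w) = 0" using Suc.prems(2)[rule_format, of 0] by simp
  show ?case
  proof (induction n rule: int_induct[where k=0])
    case base
    then show ?case using h0 .
  next
    case (step1 i)
    then show ?case using step[of "i+1"] by simp
  next
    case (step2 i)
    then show ?case using step[of i] by simp
  qed
qed




lemma box_zero:
  fixes h :: "int ^ 'd \<Rightarrow> int"
  assumes M: "M > 0"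
    and rel: "\<forall>k. foldr nabla (replicate r (axis k M)) h = (\<lambda>_. 0)"
    and box: "\<forall>y. (\<forall>j. 0 \<le> y$j \<and> y$j < int r * M) \<longrightarrow> h y = 0"
  shows "h y = 0"
proof -
  have "finite K \<Longrightarrow> \<forall>y. (\<forall>j. j \<notin> K \<longrightarrow> 0 \<le> y$j \<and> y$j < int r * M) \<longrightarrow> h y = 0" for K :: "'d set"
  proof (induction K rule: finite_induct)
    case empty
    then show ?case using box by simp
  next
    case (insert k K)
    show ?case
    proof (intro allI impI)
      fix y :: "int ^ 'd" assume yc: "\<forall>j. j \<notin> insert k K \<longrightarrow> 0 \<le> y$j \<and> y$j < int r * M"
      define q where "q = y$k div M"
      define s where "s = y$k mod M"
      have s: "0 \<le> s" "s < M" "y$k = q * M + s" using M by (auto simp: q_def s_def)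
      define x0 where "x0 = y - q *s axis k M"
      have "h (x0 + n *s axis k M) = 0" for n
      proof (rule rec1[OF rel[rule_format]], intro allI impI)
        fix i assume i: "i < r"
        let ?z = "x0 + of_nat i *s axis k M"
        have zj: "?z $ j = y $ j" if "j \<noteq> k" for j using that by (simp add: x0_def axis_def)
        have zk: "?z $ k = s + of_nat i * M" using s by (simp add: x0_def axis_def algebra_simps)
        have "of_nat i * M + M \<le> int r * M"
        proof -
          have "int i + 1 \<le> int r" using i by simp
          then have "(int i + 1) * M \<le> int r * M" using M by (intro mult_right_mono) auto
          then show ?thesis by (simp add: algebra_simps)
        qed
        then have "\<forall>j. j \<notin> K \<longrightarrow> 0 \<le> ?z$j \<and> ?z$j < int r * M"
        proof (intro allI impI)
          fix j assume jK: "j \<notin> K"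
          show "0 \<le> ?z$j \<and> ?z$j < int r * M"
          proof (cases "j = k")
            case True
            have "0 \<le> of_nat i * M" using M by simp
            then have "?z$j = s + of_nat i * M" using True zk by simp
            then show ?thesis using \<open>0 \<le> of_nat i * M\<close> s \<open>of_nat i * M + M \<le> int r * M\<close> by linarith
          next
            case False
            then show ?thesis using zj[OF False] yc jK by simp
          qed
        qed
        then show "h ?z = 0" using insert.IH by blast
      qed
      from this[of q] show "h y = 0" by (simp add: x0_def)
    qed
  qed
  from this[of UNIV] show ?thesis by simp
qed

lemma inv_smult:
  fixes h :: "int ^ 'd \<Rightarrow> 'b"
  assumes "\<forall>x. h (x - v) = h x"
  shows "h (x - n *s v) = h x"
proof -
  have A: "h (x - of_nat m *s v) = h x" for m x
  proof (induction m arbitrary: x)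
    case 0 then show ?case by (simp add: vec_eq_iff)
  next
    case (Suc m)
    have eq: "x - of_nat (Suc m) *s v = (x - of_nat m *s v) - v" by (simp add: vec_eq_iff algebra_simps)
    show ?case by (simp only: eq assms[rule_format] Suc.IH)
  qed
  have B: "h (x + of_nat m *s v) = h x" for m x
    using A[where x="x + of_nat m *s v" and m=m] by (simp add: vec_eq_iff)
  show ?thesis
  proof (cases "n \<ge> 0")
    case True
    then obtain m where "n = of_nat m" by (intro that[of "nat n"]) simp
    then show ?thesis using A by simp
  next
    case False
    then obtain m where "n = - of_nat m" by (intro that[of "nat (- n)"]) simp
    then have eq: "x - n *s v = x + of_nat m *s v" by (simp add: vec_eq_iff)
    show ?thesis unfolding eq by (rule B)
  qed
qed

lemma inv_add:
  fixes v w :: "'a::ab_group_add"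
  assumes "\<forall>x. h (x - v) = h x" "\<forall>x. h (x - w) = h x"
  shows "h (x - (v + w)) = h x"
proof -
  have eq: "x - (v + w) = (x - v) - w" by (simp add: diff_diff_eq)
  have "h ((x - v) - w) = h (x - v)" using assms(2) by blast
  also have "\<dots> = h x" using assms(1) by blast
  finally show ?thesis unfolding eq .
qed

lemma inv_sum:
  fixes X :: "(int ^ 'd) list" and h :: "int ^ 'd \<Rightarrow> 'b"
  assumes "finite B" "\<forall>b\<in>B. \<forall>x. h (x - X!b) = h x"
  shows "\<forall>x. h (x - (\<Sum>b\<in>B. n b *s X!b)) = h x"
  using assms
proof (induction B rule: finite_induct)
  case empty
  then show ?case by simp
next
  case (insert b B)
  have P1: "\<forall>x. h (x - n b *s X!b) = h x" using insert.prems inv_smult[of h "X!b"] by simp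
  have P2: "\<forall>x. h (x - (\<Sum>b\<in>B. n b *s X!b)) = h x" using insert by simp
  show ?case using inv_add[OF P1 P2] insert.hyps by simp
qed




definition ibasis :: "(int ^ 'd) list \<Rightarrow> nat set \<Rightarrow> bool" where
  "ibasis X B \<longleftrightarrow> B \<subseteq> {..<length X} \<and> inj_on (\<lambda>i. to_real (X!i)) B
     \<and> independent ((\<lambda>i. to_real (X!i)) ` B) \<and> span ((\<lambda>i. to_real (X!i)) ` B) = UNIV"

lemma to_real_add[simp]: "to_real (a + b) = to_real a + to_real b"
  by (simp add: to_real_def vec_eq_iff)
lemma to_real_zero[simp]: "to_real 0 = 0"
  by (simp add: to_real_def vec_eq_iff)
lemma to_real_smult[simp]: "to_real (c *s a) = of_int c *\<^sub>R to_real a"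
  by (simp add: to_real_def vec_eq_iff)
lemma to_real_sum: "to_real (\<Sum>i\<in>I. f i) = (\<Sum>i\<in>I. to_real (f i))"
  by (induction I rule: infinite_finite_induct) auto
lemma to_real_diff[simp]: "to_real (a - b) = to_real a - to_real b"
  by (simp add: to_real_def vec_eq_iff)
lemma to_real_inj: "to_real a = to_real b \<longleftrightarrow> a = b"
  by (simp add: to_real_def vec_eq_iff)

lemma basis_axis:
  fixes X :: "(int ^ 'd) list"
  assumes B: "ibasis X B"
  shows "\<exists>c n. c \<noteq> 0 \<and> axis k c = (\<Sum>b\<in>B. n b *s X!b)"
proof -
  let ?v = "\<lambda>i. to_real (X!i)"
  have fin: "finite B" using B unfolding ibasis_def by (meson finite_lessThan finite_subset)
  have indep: "independent (?v ` B)" and inj: "inj_on ?v B" using B unfolding ibasis_def by auto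
  have "card (?v ` B) = dim (UNIV :: (real^'d) set)"
    using B unfolding ibasis_def by (intro basis_card_eq_dim) auto
  then have cB: "card B = CARD('d)" using card_image[OF inj] by simp
  define I where "I = insert None (Some ` B)"
  define F where "F = (\<lambda>i j. case i of None \<Rightarrow> axis k 1 $ j | Some b \<Rightarrow> (X!b) $ j)"
  have fI: "finite I" "card I = CARD('d) + 1"
    using fin cB by (auto simp: I_def card_image)
  obtain c where c: "\<exists>i\<in>I. c i \<noteq> 0" "\<forall>j\<in>UNIV. (\<Sum>i\<in>I. c i * F i j) = (0::int)"
    using elim_rel[of "UNIV :: 'd set" I F] fI by auto
  have sumI: "(\<Sum>i\<in>I. c i * F i j) = c None * axis k 1 $ j + (\<Sum>b\<in>B. c (Some b) * (X!b) $ j)" for j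
    unfolding I_def using fin by (simp add: sum.reindex F_def)
  have vec0: "c None *s axis k 1 + (\<Sum>b\<in>B. c (Some b) *s X!b) = 0"
    using c(2) sumI by (simp add: vec_eq_iff sum_component)
  have cN: "c None \<noteq> 0"
  proof
    assume cN0: "c None = 0"
    then have "(\<Sum>b\<in>B. c (Some b) *s X!b) = 0" using vec0 by (simp add: vec_eq_iff)
    then have "to_real (\<Sum>b\<in>B. c (Some b) *s X!b) = 0" by simp
    then have R: "(\<Sum>b\<in>B. of_int (c (Some b)) *\<^sub>R ?v b) = 0" by (simp add: to_real_sum)
    define u where "u = (\<lambda>w. of_int (c (Some (the_inv_into B ?v w))) :: real)"
    have "(\<Sum>w\<in>?v ` B. u w *\<^sub>R w) = (\<Sum>b\<in>B. u (?v b) *\<^sub>R ?v b)"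
      by (rule sum.reindex[OF inj, unfolded o_def])
    also have "\<dots> = (\<Sum>b\<in>B. of_int (c (Some b)) *\<^sub>R ?v b)"
      using inj by (intro sum.cong) (auto simp: u_def the_inv_into_f_f[OF inj])
    finally have "(\<Sum>w\<in>?v ` B. u w *\<^sub>R w) = 0" using R by simp
    then have "\<forall>w\<in>?v ` B. u w = 0" using indep by (auto simp: independent_explicit)
    then have "\<forall>b\<in>B. c (Some b) = 0" using inj by (auto simp: u_def the_inv_into_f_f[OF inj])
    with cN0 c(1) show False by (auto simp: I_def)
  qed
  have "axis k (c None) = c None *s axis k 1" by (simp add: vec_eq_iff axis_def)
  also have "\<dots> = (\<Sum>b\<in>B. (- c (Some b)) *s X!b)"
    using vec0 by (simp add: vec_eq_iff sum_component sum_negf eq_neg_iff_add_eq_0)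
  finally have "axis k (c None) = (\<Sum>b\<in>B. (- c (Some b)) *s X!b)" .
  then show ?thesis using cN by (intro exI[of _ "c None"] exI[of _ "\<lambda>b. - c (Some b)"]) simp
qed

lemma basis_inv:
  fixes X :: "(int ^ 'd) list"
  assumes B: "ibasis X B"
  shows "\<exists>c>0. \<forall>m (h::int^'d\<Rightarrow>int). (\<forall>b\<in>B. \<forall>x. h (x - X!b) = h x) \<longrightarrow> (\<forall>x. h (x - axis k (c * m)) = h x)"
proof -
  obtain c n where cn: "c \<noteq> 0" "axis k c = (\<Sum>b\<in>B. n b *s X!b)" using basis_axis[OF B] by blast
  have fin: "finite B" using B unfolding ibasis_def by (meson finite_lessThan finite_subset)
  show ?thesis
  proof (intro exI conjI allI impI)
    show "\<bar>c\<bar> > 0" using cn by simp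
    fix m and h :: "int^'d\<Rightarrow>int" and x assume inv: "\<forall>b\<in>B. \<forall>x. h (x - X!b) = h x"
    have "axis k (\<bar>c\<bar> * m) = (\<Sum>b\<in>B. (sgn c * m * n b) *s X!b)"
    proof -
      have "axis k (\<bar>c\<bar> * m) = (sgn c * m) *s axis k c"
        by (simp add: vec_eq_iff axis_def abs_sgn algebra_simps)
      also have "\<dots> = (\<Sum>b\<in>B. (sgn c * m * n b) *s X!b)"
        by (simp add: cn(2) vec_eq_iff sum_component sum_distrib_left algebra_simps)
      finally show ?thesis .
    qed
    then show "h (x - axis k (\<bar>c\<bar> * m)) = h x" using inv_sum[OF fin inv] by simp
  qed
qed




lemma transversal:
  fixes X :: "(int ^ 'd) list"
  assumes spans: "span (to_real ` set X) = UNIV"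
    and S'sub: "S' \<subseteq> {..<length X}"
    and hit: "\<forall>B. ibasis X B \<longrightarrow> S' \<inter> B \<noteq> {}"
  shows "\<exists>C\<in>cocircuits X. C \<subseteq> S'"
proof -
  define v where "v = (\<lambda>i. to_real (X!i))"
  define R where "R = {..<length X} - S'"
  define VR where "VR = v ` R"
  have nspan: "span VR \<noteq> UNIV"
  proof
    assume sp: "span VR = UNIV"
    obtain Bv where Bv: "Bv \<subseteq> VR" "independent Bv" "VR \<subseteq> span Bv"
      using maximal_independent_subset[of VR] by blast
    define g where "g = (\<lambda>w. SOME i. i \<in> R \<and> v i = w)"
    have gi: "g w \<in> R \<and> v (g w) = w" if "w \<in> Bv" for w
    proof -
      have "\<exists>i. i \<in> R \<and> v i = w" using that Bv(1) unfolding VR_def by auto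
      then show ?thesis unfolding g_def by (rule someI_ex)
    qed
    define B where "B = g ` Bv"
    have vB: "v ` B = Bv" unfolding B_def using gi by (force simp: image_image)
    have injB: "inj_on v B" unfolding B_def inj_on_def using gi by auto
    have BR: "B \<subseteq> R" unfolding B_def using gi by auto
    have "span Bv = UNIV"
      using sp span_mono[OF Bv(3)] by (simp add: span_span) (metis top.extremum_uniqueI)
    then have "ibasis X B" unfolding ibasis_def using vB injB BR Bv(2)
      by (auto simp: v_def R_def)
    with hit have "S' \<inter> B \<noteq> {}" by blast
    with BR show False by (auto simp: R_def)
  qed
  have dimVR: "dim VR < CARD('d)"
  proof -
    have "dim VR \<le> DIM(real^'d)" by (rule dim_subset_UNIV)
    moreover have "dim VR \<noteq> DIM(real^'d)" using nspan dim_eq_full by blast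
    ultimately show ?thesis by simp
  qed
  obtain I where I: "I \<subseteq> VR" "independent I" "VR \<subseteq> span I"
    using maximal_independent_subset[of VR] by blast
  define Vall where "Vall = to_real ` set X"
  have VRall: "VR \<subseteq> Vall" unfolding VR_def Vall_def v_def R_def by auto
  obtain Bf where Bf: "I \<subseteq> Bf" "Bf \<subseteq> Vall" "independent Bf" "Vall \<subseteq> span Bf"
    using maximal_independent_subset_extend[of I Vall] I VRall by blast
  have spBf: "span Bf = UNIV"
    using spans span_mono[OF Bf(4)] unfolding Vall_def by (simp add: span_span) (metis top.extremum_uniqueI)
  have finBf: "finite Bf" using Bf(3) by (simp add: independent_imp_finite)
  have cBf: "card Bf = CARD('d)"
    using dim_span_eq_card_independent[OF Bf(3)] spBf by simp
  have cI: "card I = dim VR" using basis_card_eq_dim[OF I(1) I(3) I(2)] .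
  have "I \<noteq> Bf" using cI cBf dimVR by auto
  then obtain b0 where b0: "b0 \<in> Bf" "b0 \<notin> I" using Bf(1) by blast
  define H where "H = span (Bf - {b0})"
  have indH: "independent (Bf - {b0})" using Bf(3) by (rule independent_mono) auto
  have dimH: "dim H = CARD('d) - 1"
    unfolding H_def using dim_span_eq_card_independent[OF indH] cBf finBf b0 by simp
  have hyp: "spanned_hyperplane X H"
    unfolding spanned_hyperplane_def using dimH Bf(2) unfolding H_def Vall_def by blast
  define C where "C = {i. i < length X \<and> to_real (X ! i) \<notin> H}"
  have Cc: "C \<in> cocircuits X" unfolding cocircuits_def C_def using hyp by blast
  have "C \<subseteq> S'"
  proof
    fix i assume iC: "i \<in> C"
    show "i \<in> S'"
    proof (rule ccontr)
      assume "i \<notin> S'"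
      then have "v i \<in> VR" using iC unfolding C_def VR_def R_def by auto
      then have "v i \<in> span I" using I(3) by blast
      moreover have "span I \<subseteq> H" unfolding H_def using Bf(1) b0 by (intro span_mono) auto
      ultimately have "to_real (X!i) \<in> H" by (auto simp: v_def)
      with iC show False unfolding C_def by blast
    qed
  qed
  with Cc show ?thesis by blast
qed

lemma good_intro:
  assumes "\<forall>B\<in>set Bs. B \<subseteq> {..<n}" "S \<subseteq> {..<n}"
    "\<forall>S'. S \<subseteq> S' \<longrightarrow> S' \<subseteq> {..<n} \<longrightarrow> (\<forall>B\<in>set Bs. S' \<inter> B \<noteq> {}) \<longrightarrow> S' \<in> T"
  shows "good T Bs S"
  using assms
proof (induction Bs arbitrary: S)
  case Nil
  then show ?case by auto
next
  case (Cons B Bs)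
  show ?case
  proof (simp only: good.simps, intro ballI)
    fix b assume b: "b \<in> B"
    show "good T Bs (insert b S)"
    proof (rule Cons.IH)
      show "\<forall>B\<in>set Bs. B \<subseteq> {..<n}" using Cons.prems by simp
      show "insert b S \<subseteq> {..<n}" using Cons.prems b by auto
      show "\<forall>S'. insert b S \<subseteq> S' \<longrightarrow> S' \<subseteq> {..<n} \<longrightarrow> (\<forall>B\<in>set Bs. S' \<inter> B \<noteq> {}) \<longrightarrow> S' \<in> T"
      proof (intro allI impI)
        fix S' assume H: "insert b S \<subseteq> S'" "S' \<subseteq> {..<n}" "\<forall>B\<in>set Bs. S' \<inter> B \<noteq> {}"
        have "\<forall>B'\<in>set (B # Bs). S' \<inter> B' \<noteq> {}" using H b by auto
        then show "S' \<in> T" using Cons.prems(3) H by auto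
      qed
    qed
  qed
qed

lemma nabla_sum: "nabla a (\<lambda>x. \<Sum>i\<in>I. c i * F i x) = (\<lambda>x. \<Sum>i\<in>I. c i * nabla a (F i) x)"
  by (simp add: nabla_def fun_eq_iff sum_subtractf right_diff_distrib)

lemma foldr_nabla_sum:
  "foldr (\<lambda>i g. nabla (X!i) g) L (\<lambda>x. \<Sum>i\<in>I. c i * F i x)
   = (\<lambda>x. \<Sum>i\<in>I. c i * foldr (\<lambda>i g. nabla (X!i) g) L (F i) x)"
proof (induction L)
  case Nil
  then show ?case by simp
next
  case (Cons a L)
  then show ?case by (simp add: nabla_sum)
qed

lemma nabla_set_sum:
  "nabla_set X A (\<lambda>x. \<Sum>i\<in>I. c i * F i x) = (\<lambda>x. \<Sum>i\<in>I. c i * nabla_set X A (F i) x)"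
  unfolding nabla_set_def by (rule foldr_nabla_sum)




lemma box_finite: "finite {y :: int ^ 'd. \<forall>j. 0 \<le> y$j \<and> y$j < N}"
proof -
  have "{y :: int ^ 'd. \<forall>j. 0 \<le> y$j \<and> y$j < N} \<subseteq> (\<lambda>g. \<chi> j. g j) ` (PiE UNIV (\<lambda>_. {0..<N}))"
  proof
    fix y :: "int ^ 'd" assume "y \<in> {y. \<forall>j. 0 \<le> y$j \<and> y$j < N}"
    then have "(\<lambda>j. y$j) \<in> PiE UNIV (\<lambda>_. {0..<N})" by auto
    moreover have "y = (\<chi> j. (\<lambda>j. y$j) j)" by simp
    ultimately show "y \<in> (\<lambda>g. \<chi> j. g j) ` (PiE UNIV (\<lambda>_. {0..<N}))" by blast
  qed
  moreover have "finite (PiE (UNIV::'d set) (\<lambda>_. {0..<N}))" by (intro finite_PiE) auto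
  ultimately show ?thesis using finite_subset by blast
qed

lemma DM_finite:
  fixes X :: "(int ^ 'd) list" and T :: "nat set set"
  assumes spans: "span (to_real ` set X) = UNIV"
    and T_up: "\<forall>A\<in>T. \<forall>B. A \<subseteq> B \<and> B \<subseteq> {..<length X} \<longrightarrow> B \<in> T"
    and coc: "cocircuits X \<subseteq> T"
  shows "finite_rank (DM X T)"
proof -
  have finB: "finite {B. ibasis X B}"
    by (rule finite_subset[of _ "Pow {..<length X}"]) (auto simp: ibasis_def)
  obtain Bs where Bs: "set Bs = {B. ibasis X B}" using finite_list[OF finB] by blast
  define P where "P = (\<lambda>B k c. c > 0 \<and> (\<forall>m (h::int^'d\<Rightarrow>int). (\<forall>b\<in>B. \<forall>x. h (x - X!b) = h x) \<longrightarrow> (\<forall>x. h (x - axis k (c * m)) = h x)))"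
  define cf where "cf = (\<lambda>B k. SOME c. P B k c)"
  have cfP: "P B k (cf B k)" if "ibasis X B" for B k
    unfolding cf_def using basis_inv[OF that, of k] unfolding P_def by (rule someI_ex)
  define M where "M = (\<Prod>B\<in>set Bs. \<Prod>k\<in>(UNIV::'d set). cf B k)"
  have Mpos: "M > 0" unfolding M_def
    using cfP Bs by (intro prod_pos) (auto simp: P_def)
  have Mdvd: "cf B k dvd M" if "B \<in> set Bs" for B k
  proof -
    have "cf B k dvd (\<Prod>k\<in>(UNIV::'d set). cf B k)" by (rule dvd_prodI) auto
    also have "\<dots> dvd M" unfolding M_def using that
      by (intro dvd_prodI[where f="\<lambda>B. \<Prod>k\<in>(UNIV::'d set). cf B k"]) auto
    finally show ?thesis .
  qed
  define r where "r = length Bs"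
  have rel: "foldr nabla (replicate r (axis k M)) f = (\<lambda>_. 0)"
    if f: "\<forall>A\<in>T. nabla_set X A f = (\<lambda>_. 0)" for f k
  proof -
    have g: "good T Bs {}"
    proof (rule good_intro[where n="length X"])
      show "\<forall>B\<in>set Bs. B \<subseteq> {..<length X}" using Bs by (auto simp: ibasis_def)
      show "{} \<subseteq> {..<length X}" by simp
      show "\<forall>S'. {} \<subseteq> S' \<longrightarrow> S' \<subseteq> {..<length X} \<longrightarrow> (\<forall>B\<in>set Bs. S' \<inter> B \<noteq> {}) \<longrightarrow> S' \<in> T"
      proof (intro allI impI)
        fix S' assume H: "S' \<subseteq> {..<length X}" "\<forall>B\<in>set Bs. S' \<inter> B \<noteq> {}"
        then obtain C where C: "C \<in> cocircuits X" "C \<subseteq> S'"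
          using transversal[OF spans H(1)] Bs by auto
        then show "S' \<in> T" using coc T_up H(1) by blast
      qed
    qed
    have inv: "\<forall>i<length Bs. \<forall>h::int^'d\<Rightarrow>int. (\<forall>b\<in>Bs!i. \<forall>x. h (x - X!b) = h x) \<longrightarrow>
        (\<forall>x. h (x - replicate r (axis k M) ! i) = h x)"
    proof (intro allI impI)
      fix i and h :: "int^'d\<Rightarrow>int" and x assume i: "i < length Bs" and hb: "\<forall>b\<in>Bs!i. \<forall>x. h (x - X!b) = h x"
      have B: "Bs!i \<in> set Bs" using i by simp
      then have ib: "ibasis X (Bs!i)" using Bs by auto
      obtain m where m: "M = cf (Bs!i) k * m" using Mdvd[OF B, of k] by (auto elim: dvdE)
      have "h (x - axis k (cf (Bs!i) k * m)) = h x" using cfP[OF ib, of k] hb unfolding P_def by blast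
      then show "h (x - replicate r (axis k M) ! i) = h x" using i m by (simp add: r_def)
    qed
    have "foldr nabla (replicate r (axis k M)) (nabla_set X {} f) = (\<lambda>_. 0)"
      by (rule disc_good[OF f g]) (use inv in \<open>auto simp: r_def\<close>)
    then show ?thesis by simp
  qed
  define S where "S = {y :: int ^ 'd. \<forall>j. 0 \<le> y$j \<and> y$j < int r * M}"
  show ?thesis
  proof (rule finite_rank_by_data[of S])
    show "finite S" unfolding S_def by (rule box_finite)
    fix fs :: "(int^'d \<Rightarrow> int) list" and c
    assume fs: "set fs \<subseteq> DM X T" and van: "\<forall>x\<in>S. (\<Sum>i<length fs. c i * (fs!i) x) = 0"
    define g where "g = (\<lambda>x. \<Sum>i<length fs. c i * (fs!i) x)"
    have gDM: "\<forall>A\<in>T. nabla_set X A g = (\<lambda>_. 0)"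
    proof
      fix A assume A: "A \<in> T"
      have "\<forall>i<length fs. nabla_set X A (fs!i) = (\<lambda>_. 0)"
        using fs A unfolding DM_def by (auto dest!: nth_mem)
      then show "nabla_set X A g = (\<lambda>_. 0)" unfolding g_def nabla_set_sum by (simp add: fun_eq_iff)
    qed
    have "g y = 0" for y
      by (rule box_zero[OF Mpos]) (use rel[OF gDM] van in \<open>auto simp: S_def g_def\<close>)
    then show "\<forall>x. (\<Sum>i<length fs. c i * (fs!i) x) = 0" by (simp add: g_def)
  qed
qed




lemma hyperplane_normal:
  fixes X :: "(int ^ 'd) list"
  assumes "spanned_hyperplane X H"
  shows "\<exists>n. n \<noteq> 0 \<and> H = {y. n \<bullet> y = 0}"
proof -
  obtain S where S: "H = span S" and dH: "dim H = CARD('d) - 1"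
    using assms unfolding spanned_hyperplane_def by blast
  have "dim H < DIM(real^'d)" using dH by simp
  then obtain n where n: "n \<noteq> 0" "\<And>y. y \<in> span H \<Longrightarrow> orthogonal n y"
    using orthogonal_to_subspace_exists by blast
  have sub: "H \<subseteq> {y. n \<bullet> y = 0}" using n(2) span_base unfolding orthogonal_def by blast
  have "H = {y. n \<bullet> y = 0}"
  proof (rule subspace_dim_equal)
    show "subspace H" using S by simp
    show "subspace {y. n \<bullet> y = 0}" by (rule subspace_hyperplane)
    show "H \<subseteq> {y. n \<bullet> y = 0}" by (rule sub)
    show "dim {y. n \<bullet> y = 0} \<le> dim H" using dim_hyperplane[OF n(1)] dH by simp
  qed
  with n show ?thesis by blast
qed

lemma cocircuit_data:
  fixes X :: "(int ^ 'd) list"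
  assumes spans: "span (to_real ` set X) = UNIV"
    and T_sub: "T \<subseteq> Pow {..<length X}"
    and T_up: "\<forall>A\<in>T. \<forall>B. A \<subseteq> B \<and> B \<subseteq> {..<length X} \<longrightarrow> B \<in> T"
    and C: "C \<in> cocircuits X" "C \<notin> T"
  shows "\<exists>n i0. i0 < length X \<and> n \<bullet> to_real (X!i0) \<noteq> 0 \<and>
     (\<forall>A\<in>T. \<exists>i\<in>A. n \<bullet> to_real (X!i) = 0)"
proof -
  obtain H where H: "spanned_hyperplane X H" "C = {i. i < length X \<and> to_real (X ! i) \<notin> H}"
    using C(1) unfolding cocircuits_def by blast
  obtain n where n: "n \<noteq> 0" "H = {y. n \<bullet> y = 0}" using hyperplane_normal[OF H(1)] by blast
  have "\<exists>i0\<in>C. True"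
  proof (rule ccontr)
    assume "\<not> (\<exists>i0\<in>C. True)"
    then have "\<forall>i<length X. to_real (X!i) \<in> H" using H(2) by auto
    then have "to_real ` set X \<subseteq> H" by (auto simp: in_set_conv_nth)
    then have "span (to_real ` set X) \<subseteq> H" using n(2) by (intro span_minimal) (auto intro: subspace_hyperplane)
    then have "n \<in> H" using spans by auto
    with n show False by simp
  qed
  then obtain i0 where i0: "i0 \<in> C" by blast
  have "\<forall>A\<in>T. \<exists>i\<in>A. n \<bullet> to_real (X!i) = 0"
  proof
    fix A assume A: "A \<in> T"
    show "\<exists>i\<in>A. n \<bullet> to_real (X!i) = 0"
    proof (rule ccontr)
      assume "\<not> ?thesis"
      then have "A \<subseteq> C" using A T_sub H(2) n(2) by auto
      then have "C \<in> T" using T_up A H(2) by blast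
      with C(2) show False by blast
    qed
  qed
  then show ?thesis using i0 H(2) n(2) by blast
qed

lemma foldr_nabla_level:
  fixes X :: "(int ^ 'd) list" and n :: "real ^ 'd"
  shows "\<exists>G'. foldr (\<lambda>i g. nabla (X!i) g) L (\<lambda>x. G (n \<bullet> to_real x)) = (\<lambda>x. G' (n \<bullet> to_real x))
     \<and> ((\<exists>i\<in>set L. n \<bullet> to_real (X!i) = 0) \<longrightarrow> G' = (\<lambda>_. 0))"
proof (induction L)
  case Nil
  then show ?case by auto
next
  case (Cons a L)
  from Cons.IH obtain G' where G': "foldr (\<lambda>i g. nabla (X!i) g) L (\<lambda>x. G (n \<bullet> to_real x)) = (\<lambda>x. G' (n \<bullet> to_real x))"
    "(\<exists>i\<in>set L. n \<bullet> to_real (X!i) = 0) \<longrightarrow> G' = (\<lambda>_. 0)" by (elim exE conjE) assumption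
  define G'' where "G'' = (\<lambda>t. G' t - G' (t - n \<bullet> to_real (X!a)))"
  have eq: "foldr (\<lambda>i g. nabla (X!i) g) (a # L) (\<lambda>x. G (n \<bullet> to_real x)) = (\<lambda>x. G'' (n \<bullet> to_real x))"
    by (simp only: foldr_Cons o_apply G'(1)) (simp add: nabla_def G''_def inner_diff_right)
  have "(\<exists>i\<in>set (a # L). n \<bullet> to_real (X!i) = 0) \<longrightarrow> G'' = (\<lambda>_. 0)"
    using G'(2) by (auto simp: G''_def fun_eq_iff)
  then show ?case using eq by (intro exI[of _ G'']) simp
qed

lemma DM_infinite:
  fixes X :: "(int ^ 'd) list"
  assumes spans: "span (to_real ` set X) = UNIV"
    and T_sub: "T \<subseteq> Pow {..<length X}"
    and T_up: "\<forall>A\<in>T. \<forall>B. A \<subseteq> B \<and> B \<subseteq> {..<length X} \<longrightarrow> B \<in> T"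
    and C: "C \<in> cocircuits X" "C \<notin> T"
  shows "\<not> finite_rank (DM X T)"
proof -
  obtain n i0 where d: "i0 < length X" "n \<bullet> to_real (X!i0) \<noteq> 0"
    "\<forall>A\<in>T. \<exists>i\<in>A. n \<bullet> to_real (X!i) = 0"
    using cocircuit_data[OF spans T_sub T_up C] by blast
  define v where "v = X!i0"
  define lv where "lv = n \<bullet> to_real v"
  have lv: "lv \<noteq> 0" using d(2) by (simp add: lv_def v_def)
  define \<phi> where "\<phi> = (\<lambda>k::nat. \<lambda>x. if n \<bullet> to_real x = of_nat k * lv then 1 else (0::int))"
  show ?thesis
  proof (rule not_finite_rank)
    fix N
    define fs where "fs = map \<phi> [0..<N]"
    have inDM: "set fs \<subseteq> DM X T"
    proof
      fix f assume "f \<in> set fs"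
      then obtain k where f: "f = \<phi> k" by (auto simp: fs_def)
      have "\<forall>A\<in>T. nabla_set X A f = (\<lambda>_. 0)"
      proof
        fix A assume A: "A \<in> T"
        have finA: "finite A" using A T_sub by (auto intro: finite_subset)
        obtain G' where G': "nabla_set X A (\<lambda>x. (\<lambda>t. if t = of_nat k * lv then 1 else (0::int)) (n \<bullet> to_real x))
           = (\<lambda>x. G' (n \<bullet> to_real x))"
          "(\<exists>i\<in>set (sorted_list_of_set A). n \<bullet> to_real (X!i) = 0) \<longrightarrow> G' = (\<lambda>_. 0)"
          using foldr_nabla_level[where X=X and L="sorted_list_of_set A" and n=n and G="\<lambda>t. if t = of_nat k * lv then 1 else 0"] unfolding nabla_set_def by (elim exE conjE) assumption
        have "G' = (\<lambda>_. 0)" using G'(2) d(3) A finA by auto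
        then show "nabla_set X A f = (\<lambda>_. 0)" using G'(1) by (simp add: f \<phi>_def)
      qed
      then show "f \<in> DM X T" by (simp add: DM_def)
    qed
    have "lin_indep_fun fs"
      unfolding lin_indep_fun_def
    proof (intro allI impI)
      fix c :: "nat \<Rightarrow> int" and i
      assume H: "\<forall>x. (\<Sum>j<length fs. c j * (fs!j) x) = 0" and i: "i < length fs"
      have Ni: "i < N" using i by (simp add: fs_def)
      have "(\<Sum>j<length fs. c j * (fs!j) (of_nat i *s v)) = (\<Sum>j<N. c j * (if j = i then 1 else 0))"
      proof (intro sum.cong)
        show "{..<length fs} = {..<N}" by (simp add: fs_def)
        fix j assume "j \<in> {..<N}"
        then have "(fs!j) (of_nat i *s v) = \<phi> j (of_nat i *s v)" by (simp add: fs_def)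
        also have "\<dots> = (if j = i then 1 else 0)"
          using lv by (simp add: \<phi>_def lv_def inner_scaleR_right)
        finally show "c j * (fs!j) (of_nat i *s v) = c j * (if j = i then 1 else 0)" by simp
      qed
      also have "\<dots> = c i" using Ni by (simp add: if_distrib[of "\<lambda>t. c _ * t"] cong: if_cong)
      finally show "c i = 0" using H by simp
    qed
    moreover have "length fs = N" by (simp add: fs_def)
    ultimately show "\<exists>fs. set fs \<subseteq> DM X T \<and> lin_indep_fun fs \<and> length fs = N" using inDM by blast
  qed
qed




lemma dderivs_append: "dderivs (xs @ ys) f = dderivs xs (dderivs ys f)"
  by (induction xs) auto

lemma smooth_diff: "smooth f \<Longrightarrow> f differentiable (at x)"
  unfolding smooth_def by (metis dderivs.simps(1))

lemma smooth_dderivs: "smooth f \<Longrightarrow> smooth (dderivs as f)"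
  unfolding smooth_def by (metis dderivs_append)

lemma smooth_dderiv: "smooth f \<Longrightarrow> smooth (dderiv a f)"
  using smooth_dderivs[of f "[a]"] by simp

lemma has_deriv_fd: "g differentiable (at y) \<Longrightarrow> (g has_derivative frechet_derivative g (at y)) (at y)"
  using frechet_derivative_works by blast

lemma line_deriv:
  fixes g :: "real ^ 'd \<Rightarrow> real"
  assumes "\<forall>y. g differentiable (at y)"
  shows "((\<lambda>t. g (p + t *\<^sub>R a)) has_real_derivative dderiv a g (p + t *\<^sub>R a)) (at t)"
proof -
  let ?D = "frechet_derivative g (at (p + t *\<^sub>R a))"
  have h1: "((\<lambda>t. p + t *\<^sub>R a) has_derivative (\<lambda>h. h *\<^sub>R a)) (at t)"
    by (auto intro!: derivative_eq_intros)
  have h2: "(g has_derivative ?D) (at (p + t *\<^sub>R a))"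
    using assms has_deriv_fd by blast
  have lin: "linear ?D" using has_derivative_linear[OF h2] .
  have "((\<lambda>t. g (p + t *\<^sub>R a)) has_derivative (\<lambda>h. ?D (h *\<^sub>R a))) (at t)"
    using has_derivative_compose[OF h1 h2] .
  moreover have "(\<lambda>h. ?D (h *\<^sub>R a)) = (\<lambda>h. ?D a * h)"
    using linear_scale[OF lin] by (auto simp: fun_eq_iff)
  ultimately show ?thesis by (simp add: has_field_derivative_def dderiv_def)
qed

lemma mixed_mvt:
  fixes g :: "real ^ 'd \<Rightarrow> real"
  assumes sm: "smooth g" and t: "t > 0"
  shows "\<exists>\<xi> \<eta>. 0 < \<xi> \<and> \<xi> < t \<and> 0 < \<eta> \<and> \<eta> < t \<and>
    g (x + t *\<^sub>R a + t *\<^sub>R b) - g (x + t *\<^sub>R a) - g (x + t *\<^sub>R b) + g x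
      = t * t * dderiv b (dderiv a g) (x + \<xi> *\<^sub>R a + \<eta> *\<^sub>R b)"
proof -
  have dg: "\<forall>y. g differentiable (at y)" using smooth_diff[OF sm] by blast
  have dga: "\<forall>y. dderiv a g differentiable (at y)" using smooth_diff[OF smooth_dderiv[OF sm]] by blast
  define \<phi> where "\<phi> = (\<lambda>u. g ((x + t *\<^sub>R b) + u *\<^sub>R a) - g (x + u *\<^sub>R a))"
  define \<phi>' where "\<phi>' = (\<lambda>u. dderiv a g ((x + t *\<^sub>R b) + u *\<^sub>R a) - dderiv a g (x + u *\<^sub>R a))"
  have D\<phi>: "(\<phi> has_real_derivative \<phi>' u) (at u)" for u
    unfolding \<phi>_def \<phi>'_def
    by (intro DERIV_diff line_deriv dg)
  obtain \<xi> where \<xi>: "0 < \<xi>" "\<xi> < t" "\<phi> t - \<phi> 0 = (t - 0) * \<phi>' \<xi>"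
    using MVT2[OF t, of \<phi> \<phi>'] D\<phi> by blast
  define \<psi> where "\<psi> = (\<lambda>v. dderiv a g ((x + \<xi> *\<^sub>R a) + v *\<^sub>R b))"
  define \<psi>' where "\<psi>' = (\<lambda>v. dderiv b (dderiv a g) ((x + \<xi> *\<^sub>R a) + v *\<^sub>R b))"
  have D\<psi>: "(\<psi> has_real_derivative \<psi>' v) (at v)" for v
    unfolding \<psi>_def \<psi>'_def by (intro line_deriv dga)
  obtain \<eta> where \<eta>: "0 < \<eta>" "\<eta> < t" "\<psi> t - \<psi> 0 = (t - 0) * \<psi>' \<eta>"
    using MVT2[OF t, of \<psi> \<psi>'] D\<psi> by blast
  have "\<phi>' \<xi> = \<psi> t - \<psi> 0" unfolding \<phi>'_def \<psi>_def by (simp add: algebra_simps)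
  then have "\<phi> t - \<phi> 0 = t * t * \<psi>' \<eta>" using \<xi>(3) \<eta>(3) by simp
  moreover have "\<phi> t - \<phi> 0 = g (x + t *\<^sub>R a + t *\<^sub>R b) - g (x + t *\<^sub>R a) - g (x + t *\<^sub>R b) + g x"
    unfolding \<phi>_def by (simp add: algebra_simps)
  ultimately show ?thesis using \<xi> \<eta> unfolding \<psi>'_def by (intro exI[of _ \<xi>] exI[of _ \<eta>]) simp
qed

lemma schwarz_pt:
  fixes g :: "real ^ 'd \<Rightarrow> real"
  assumes sm: "smooth g"
  shows "dderiv a (dderiv b g) x = dderiv b (dderiv a g) x"
proof (rule ccontr)
  define F where "F = dderiv b (dderiv a g)"
  define G where "G = dderiv a (dderiv b g)"
  assume ne: "dderiv a (dderiv b g) x \<noteq> dderiv b (dderiv a g) x"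
  define e where "e = \<bar>F x - G x\<bar> / 2"
  have e: "e > 0" using ne by (simp add: e_def F_def G_def)
  have cF: "continuous (at x) F"
    using smooth_diff[OF smooth_dderiv[OF smooth_dderiv[OF sm]]] differentiable_imp_continuous_within
    unfolding F_def by blast
  have cG: "continuous (at x) G"
    using smooth_diff[OF smooth_dderiv[OF smooth_dderiv[OF sm]]] differentiable_imp_continuous_within
    unfolding G_def by blast
  obtain d1 where d1: "d1 > 0" "\<forall>y. dist y x < d1 \<longrightarrow> dist (F y) (F x) < e"
    using cF e unfolding continuous_at_eps_delta by blast
  obtain d2 where d2: "d2 > 0" "\<forall>y. dist y x < d2 \<longrightarrow> dist (G y) (G x) < e"
    using cG e unfolding continuous_at_eps_delta by blast
  define d where "d = min d1 d2"
  have d: "d > 0" using d1 d2 by (simp add: d_def)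
  define t where "t = d / (2 * (norm a + norm b + 1))"
  have pos: "0 < 2 * (norm a + norm b + 1)" by (smt (verit) norm_ge_zero)
  have t: "t > 0" unfolding t_def using d pos by (rule divide_pos_pos)
  have close: "dist (x + \<xi> *\<^sub>R u + \<eta> *\<^sub>R w) x < d"
    if "0 < \<xi>" "\<xi> < t" "0 < \<eta>" "\<eta> < t" "(u = a \<and> w = b) \<or> (u = b \<and> w = a)" for \<xi> \<eta> u w
  proof -
    have "dist (x + \<xi> *\<^sub>R u + \<eta> *\<^sub>R w) x = norm (\<xi> *\<^sub>R u + \<eta> *\<^sub>R w)"
      by (simp add: dist_norm)
    also have "\<dots> \<le> \<xi> * norm u + \<eta> * norm w"
      using norm_triangle_ineq[of "\<xi> *\<^sub>R u" "\<eta> *\<^sub>R w"] that by simp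
    also have "\<dots> \<le> t * norm u + t * norm w"
      using that by (intro add_mono mult_right_mono) auto
    also have "\<dots> = t * (norm a + norm b)" using that(5) by (auto simp: algebra_simps)
    also have "\<dots> < t * (2 * (norm a + norm b + 1))"
      using t by (intro mult_strict_left_mono) (smt (verit) norm_ge_zero)+
    also have "\<dots> = d" unfolding t_def using pos by simp
    finally show ?thesis .
  qed
  obtain \<xi> \<eta> where m1: "0 < \<xi>" "\<xi> < t" "0 < \<eta>" "\<eta> < t"
    "g (x + t *\<^sub>R a + t *\<^sub>R b) - g (x + t *\<^sub>R a) - g (x + t *\<^sub>R b) + g x = t * t * F (x + \<xi> *\<^sub>R a + \<eta> *\<^sub>R b)"
    using mixed_mvt[OF sm t, of x a b] unfolding F_def by blast
  obtain \<xi>' \<eta>' where m2: "0 < \<xi>'" "\<xi>' < t" "0 < \<eta>'" "\<eta>' < t"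
    "g (x + t *\<^sub>R b + t *\<^sub>R a) - g (x + t *\<^sub>R b) - g (x + t *\<^sub>R a) + g x = t * t * G (x + \<xi>' *\<^sub>R b + \<eta>' *\<^sub>R a)"
    using mixed_mvt[OF sm t, of x b a] unfolding G_def by blast
  have eqv: "x + t *\<^sub>R b + t *\<^sub>R a = x + t *\<^sub>R a + t *\<^sub>R b" by (simp add: algebra_simps)
  have "t * t * F (x + \<xi> *\<^sub>R a + \<eta> *\<^sub>R b) = t * t * G (x + \<xi>' *\<^sub>R b + \<eta>' *\<^sub>R a)"
    using m1(5) m2(5)[unfolded eqv] by linarith
  then have eqFG: "F (x + \<xi> *\<^sub>R a + \<eta> *\<^sub>R b) = G (x + \<xi>' *\<^sub>R b + \<eta>' *\<^sub>R a)" using t by simp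
  have "dist (F (x + \<xi> *\<^sub>R a + \<eta> *\<^sub>R b)) (F x) < e"
    using d1(2) close[OF m1(1-4)] by (simp add: d_def)
  moreover have "dist (G (x + \<xi>' *\<^sub>R b + \<eta>' *\<^sub>R a)) (G x) < e"
    using d2(2) close[OF m2(1-4)] by (simp add: d_def)
  ultimately have "\<bar>F x - G x\<bar> < 2 * e" using eqFG by (simp add: dist_real_def)
  then show False by (simp add: e_def)
qed

lemma schwarz: "smooth g \<Longrightarrow> dderiv a (dderiv b g) = dderiv b (dderiv a g)"
  using schwarz_pt by blast




lemma dderivs_move: "smooth f \<Longrightarrow> dderivs (xs @ a # ys) f = dderivs (a # xs @ ys) f"
proof (induction xs)
  case Nil
  then show ?case by simp
next
  case (Cons x xs)
  have sm: "smooth (dderivs (xs @ ys) f)" using smooth_dderivs[OF Cons.prems] .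
  have "dderivs ((x # xs) @ a # ys) f = dderiv x (dderivs (a # xs @ ys) f)"
    using Cons by simp
  also have "\<dots> = dderiv x (dderiv a (dderivs (xs @ ys) f))" by simp
  also have "\<dots> = dderiv a (dderiv x (dderivs (xs @ ys) f))" using schwarz[OF sm] by simp
  finally show ?case by simp
qed

lemma dderivs_perm: "smooth f \<Longrightarrow> mset as = mset bs \<Longrightarrow> dderivs as f = dderivs bs f"
proof (induction as arbitrary: bs)
  case Nil
  then show ?case by simp
next
  case (Cons a as)
  have "a \<in> set bs" using Cons.prems(2) by (metis list.set_intros(1) set_mset_mset)
  then obtain xs ys where bs: "bs = xs @ a # ys" by (meson split_list)
  have "mset as = mset (xs @ ys)" using Cons.prems(2) bs by simp
  then have "dderivs as f = dderivs (xs @ ys) f" using Cons by blast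
  then show ?case using dderivs_move[OF Cons.prems(1)] bs by simp
qed

lemma dderivs_commute: "smooth h \<Longrightarrow> dderivs us (dderiv c h) = dderiv c (dderivs us h)"
proof -
  assume sm: "smooth h"
  have "dderivs us (dderiv c h) = dderivs (us @ [c]) h" by (simp add: dderivs_append)
  also have "\<dots> = dderivs (c # us) h" by (rule dderivs_perm[OF sm]) simp
  finally show ?thesis by simp
qed

lemma partial_set_empty[simp]: "partial_set X {} f = f"
  by (simp add: partial_set_def)

lemma partial_set_insert:
  assumes "smooth f" "finite S" "b \<notin> S"
  shows "partial_set X (insert b S) f = dderiv (to_real (X!b)) (partial_set X S f)"
proof -
  have "mset (map (\<lambda>i. to_real (X ! i)) (sorted_list_of_set (insert b S)))
      = mset (to_real (X!b) # map (\<lambda>i. to_real (X ! i)) (sorted_list_of_set S))"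
    using assms by (simp add: mset_map)
  from dderivs_perm[OF assms(1) this] show ?thesis unfolding partial_set_def by simp
qed

lemma dderiv_zero[simp]: "dderiv a (\<lambda>_. 0) = (\<lambda>_. 0)"
proof -
  have "frechet_derivative (\<lambda>_::real^'d. 0::real) (at x) = (\<lambda>_. 0)" for x
    by (rule frechet_derivative_at[symmetric]) (rule has_derivative_const)
  then show ?thesis by (simp add: dderiv_def fun_eq_iff)
qed

lemma dderivs_zero[simp]: "dderivs as (\<lambda>_. 0) = (\<lambda>_. 0)"
  by (induction as) auto

lemma dderivs_sum:
  fixes F :: "'i \<Rightarrow> real ^ 'd \<Rightarrow> real"
  assumes "\<forall>i\<in>I. smooth (F i)"
  shows "dderivs as (\<lambda>x. \<Sum>i\<in>I. c i * F i x) = (\<lambda>x. \<Sum>i\<in>I. c i * dderivs as (F i) x)"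
proof (induction as)
  case Nil
  then show ?case by simp
next
  case (Cons a as)
  have "dderivs (a # as) (\<lambda>x. \<Sum>i\<in>I. c i * F i x) = dderiv a (\<lambda>x. \<Sum>i\<in>I. c i * dderivs as (F i) x)"
    using Cons by simp
  also have "\<dots> = (\<lambda>x. \<Sum>i\<in>I. c i * dderivs (a # as) (F i) x)"
  proof (rule ext)
    fix x
    have "\<forall>i\<in>I. ((dderivs as (F i)) has_derivative frechet_derivative (dderivs as (F i)) (at x)) (at x)"
      using assms smooth_diff[OF smooth_dderivs] has_deriv_fd by blast
    then have "((\<lambda>x. \<Sum>i\<in>I. c i * dderivs as (F i) x) has_derivative
        (\<lambda>h. \<Sum>i\<in>I. c i * frechet_derivative (dderivs as (F i)) (at x) h)) (at x)"
      by (auto intro!: derivative_eq_intros)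
    then show "dderiv a (\<lambda>x. \<Sum>i\<in>I. c i * dderivs as (F i) x) x = (\<Sum>i\<in>I. c i * dderivs (a # as) (F i) x)"
      by (simp add: dderiv_def frechet_derivative_at[symmetric])
  qed
  finally show ?case .
qed

lemma smooth_sum:
  fixes F :: "'i \<Rightarrow> real ^ 'd \<Rightarrow> real"
  assumes "\<forall>i\<in>I. smooth (F i)"
  shows "smooth (\<lambda>x. \<Sum>i\<in>I. c i * F i x)"
  unfolding smooth_def
proof (intro allI)
  fix as x
  have "\<forall>i\<in>I. ((dderivs as (F i)) has_derivative frechet_derivative (dderivs as (F i)) (at x)) (at x)"
    using assms smooth_diff[OF smooth_dderivs] has_deriv_fd by blast
  then have "((\<lambda>x. \<Sum>i\<in>I. c i * dderivs as (F i) x) has_derivative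
        (\<lambda>h. \<Sum>i\<in>I. c i * frechet_derivative (dderivs as (F i)) (at x) h)) (at x)"
    by (auto intro!: derivative_eq_intros)
  then show "dderivs as (\<lambda>x. \<Sum>i\<in>I. c i * F i x) differentiable (at x)"
    unfolding dderivs_sum[OF assms] differentiable_def by blast
qed

lemma smooth_good:
  fixes X :: "(int ^ 'd) list" and f :: "real ^ 'd \<Rightarrow> real"
  assumes sm: "smooth f" and f: "\<forall>A\<in>T. partial_set X A f = (\<lambda>_. 0)"
  shows "good T Bs S \<Longrightarrow> finite S \<Longrightarrow> length us = length Bs \<Longrightarrow> (\<forall>B\<in>set Bs. ibasis X B) \<Longrightarrow>
    dderivs us (partial_set X S f) = (\<lambda>_. 0)"
proof (induction Bs arbitrary: us S)
  case Nil
  then show ?case using f by simp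
next
  case (Cons B Bs)
  then obtain u us' where us: "us = u # us'" by (cases us) auto
  define h where "h = dderivs us' (partial_set X S f)"
  have smP: "smooth (partial_set X S f)" unfolding partial_set_def by (rule smooth_dderivs[OF sm])
  have smh: "smooth h" unfolding h_def by (rule smooth_dderivs[OF smP])
  have zb: "dderiv (to_real (X!b)) h = (\<lambda>_. 0)" if b: "b \<in> B" for b
  proof -
    have g: "good T Bs (insert b S)" using Cons.prems(1) b by simp
    have IH: "dderivs us' (partial_set X (insert b S) f) = (\<lambda>_. 0)"
      by (rule Cons.IH[OF g]) (use Cons.prems us in auto)
    show ?thesis
    proof (cases "b \<in> S")
      case True
      then have "h = (\<lambda>_. 0)" using IH by (simp add: h_def insert_absorb)
      then show ?thesis by simp
    next
      case False
      then show ?thesis using IH Cons.prems(2)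
        by (simp add: h_def partial_set_insert[OF sm] dderivs_commute[OF smP])
    qed
  qed
  have ib: "ibasis X B" using Cons.prems(4) by simp
  have "dderiv u h x = 0" for x
  proof -
    let ?D = "frechet_derivative h (at x)"
    have lin: "linear ?D" using has_derivative_linear[OF has_deriv_fd[OF smooth_diff[OF smh]]] .
    have z: "?D w = 0" if "w \<in> (\<lambda>i. to_real (X!i)) ` B" for w
      using that zb by (auto simp: dderiv_def fun_eq_iff)
    have "u \<in> span ((\<lambda>i. to_real (X!i)) ` B)" using ib unfolding ibasis_def by simp
    then show ?thesis unfolding dderiv_def using linear_eq_0_on_span[OF lin z] by blast
  qed
  then show ?case by (simp add: us h_def[symmetric] fun_eq_iff)
qed




lemma finite_rank_by_data2:
  fixes M :: "('a \<Rightarrow> 'b::idom) set" and \<Phi> :: "('a \<Rightarrow> 'b) \<Rightarrow> 's \<Rightarrow> 'b"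
  assumes "finite S"
    and det: "\<And>fs c. set fs \<subseteq> M \<Longrightarrow> (\<forall>s\<in>S. (\<Sum>i<length fs. c i * \<Phi> (fs!i) s) = 0)
               \<Longrightarrow> (\<forall>x. (\<Sum>i<length fs. c i * (fs!i) x) = 0)"
  shows "finite_rank M"
  unfolding finite_rank_def
proof (intro exI allI impI)
  fix fs assume H: "set fs \<subseteq> M \<and> lin_indep_fun fs"
  show "length fs \<le> card S"
  proof (rule ccontr)
    assume "\<not> length fs \<le> card S"
    then have "card S < card {..<length fs}" by simp
    from elim_rel[OF assms(1) _ this, of "\<lambda>i. \<Phi> (fs!i)"] obtain c where
      c: "\<exists>i\<in>{..<length fs}. c i \<noteq> 0" "\<forall>s\<in>S. (\<Sum>i<length fs. c i * \<Phi> (fs!i) s) = 0" by auto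
    from det[OF _ c(2)] H have "\<forall>x. (\<Sum>i<length fs. c i * (fs!i) x) = 0" by blast
    with H have "\<forall>i<length fs. c i = 0" unfolding lin_indep_fun_def by blast
    with c(1) show False by auto
  qed
qed

lemma good_all_bases:
  fixes X :: "(int ^ 'd) list"
  assumes spans: "span (to_real ` set X) = UNIV"
    and T_up: "\<forall>A\<in>T. \<forall>B. A \<subseteq> B \<and> B \<subseteq> {..<length X} \<longrightarrow> B \<in> T"
    and coc: "cocircuits X \<subseteq> T"
    and Bs: "set Bs = {B. ibasis X B}"
  shows "good T Bs {}"
proof (rule good_intro[where n="length X"])
  show "\<forall>B\<in>set Bs. B \<subseteq> {..<length X}" using Bs by (auto simp: ibasis_def)
  show "{} \<subseteq> {..<length X}" by simp
  show "\<forall>S'. {} \<subseteq> S' \<longrightarrow> S' \<subseteq> {..<length X} \<longrightarrow> (\<forall>B\<in>set Bs. S' \<inter> B \<noteq> {}) \<longrightarrow> S' \<in> T"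
  proof (intro allI impI)
    fix S' assume H: "S' \<subseteq> {..<length X}" "\<forall>B\<in>set Bs. S' \<inter> B \<noteq> {}"
    then obtain C where C: "C \<in> cocircuits X" "C \<subseteq> S'"
      using transversal[OF spans H(1)] Bs by auto
    then show "S' \<in> T" using coc T_up H(1) by blast
  qed
qed

lemma line_zero:
  fixes g :: "real ^ 'd \<Rightarrow> real"
  shows "smooth g \<Longrightarrow> dderivs (replicate r w) g = (\<lambda>_. 0) \<Longrightarrow> (\<forall>i<r. dderivs (replicate i w) g x0 = 0)
    \<Longrightarrow> g (x0 + t *\<^sub>R w) = 0"
proof (induction r arbitrary: g t)
  case 0
  then show ?case by simp
next
  case (Suc r)
  define g' where "g' = dderiv w g"
  have sm': "smooth g'" unfolding g'_def by (rule smooth_dderiv[OF Suc.prems(1)])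
  have rep: "dderivs (replicate i w) g' = dderivs (replicate (Suc i) w) g" for i
  proof -
    have "dderivs (replicate i w) g' = dderivs (replicate i w @ [w]) g" by (simp add: dderivs_append g'_def)
    also have "replicate i w @ [w] = replicate (Suc i) w" by (simp add: replicate_append_same)
    finally show ?thesis .
  qed
  have z': "g' (x0 + s *\<^sub>R w) = 0" for s
    by (rule Suc.IH[OF sm']) (use Suc.prems(2,3) rep in auto)
  have dg: "\<forall>y. g differentiable (at y)" using smooth_diff[OF Suc.prems(1)] by blast
  have "((\<lambda>s. g (x0 + s *\<^sub>R w)) has_real_derivative 0) (at s)" for s
    using line_deriv[OF dg, of x0 w s] z'[of s] by (simp add: g'_def)
  then have "g (x0 + t *\<^sub>R w) = g (x0 + 0 *\<^sub>R w)"
    using DERIV_isconst_all[of "\<lambda>s. g (x0 + s *\<^sub>R w)"] by blast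
  also have "\<dots> = 0" using Suc.prems(3)[rule_format, of 0] by simp
  finally show ?case .
qed

lemma kill_count:
  fixes f :: "real ^ 'd \<Rightarrow> real"
  assumes sm: "smooth f" and z: "dderivs (replicate r e) f = (\<lambda>_. 0)" and c: "r \<le> count_list as e"
  shows "dderivs as f = (\<lambda>_. 0)"
proof -
  have sub: "replicate_mset r e \<subseteq># mset as"
    using c by (simp add: subseteq_mset_def count_mset)
  obtain rest where rest: "mset rest = mset as - replicate_mset r e" using ex_mset by blast
  have "mset as = mset (rest @ replicate r e)" using sub rest by (simp add: subset_mset.diff_add)
  then have "dderivs as f = dderivs (rest @ replicate r e) f" by (rule dderivs_perm[OF sm])
  also have "\<dots> = (\<lambda>_. 0)" by (simp add: dderivs_append z)
  finally show ?thesis .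
qed

lemma coord_zero:
  fixes f :: "real ^ 'd \<Rightarrow> real"
  assumes sm: "smooth f"
    and hr: "\<forall>k. dderivs (replicate r (axis k 1)) f = (\<lambda>_. 0)"
    and data: "\<forall>as. set as \<subseteq> range (\<lambda>k. axis k 1) \<and> length as \<le> CARD('d) * r \<longrightarrow> dderivs as f 0 = 0"
  shows "f y = 0"
proof -
  define E where "E = range (\<lambda>k::'d. axis k (1::real))"
  have finE: "finite E" unfolding E_def by simp
  have cE: "card E \<le> CARD('d)" unfolding E_def by (rule card_image_le) simp
  have A: "dderivs as f 0 = 0" if sE: "set as \<subseteq> E" for as
  proof (cases "length as \<le> CARD('d) * r")
    case True
    then show ?thesis using data sE by (auto simp: E_def)
  next
    case False
    have "\<exists>e\<in>E. r \<le> count_list as e"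
    proof (rule ccontr)
      assume "\<not> ?thesis"
      then have lt: "\<forall>e\<in>E. count_list as e \<le> r" by auto
      have "length as = (\<Sum>e\<in>E. count_list as e)" using sum_count_set[OF sE finE] by simp
      also have "\<dots> \<le> (\<Sum>e\<in>E. r)" using lt by (intro sum_mono) auto
      also have "\<dots> = card E * r" by simp
      also have "\<dots> \<le> CARD('d) * r" using cE by simp
      finally show False using False by simp
    qed
    then obtain e where e: "e \<in> E" "r \<le> count_list as e" by blast
    then obtain k where "e = axis k 1" unfolding E_def by blast
    then have "dderivs as f = (\<lambda>_. 0)" using kill_count[OF sm _ e(2)] hr by blast
    then show ?thesis by simp
  qed
  have P: "finite K \<Longrightarrow> \<forall>as. set as \<subseteq> E \<longrightarrow> (\<forall>y. (\<forall>j. j \<notin> K \<longrightarrow> y$j = 0) \<longrightarrow> dderivs as f y = 0)"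
    for K :: "'d set"
  proof (induction K rule: finite_induct)
    case empty
    have "y = 0" if "\<forall>j. y$j = 0" for y :: "real^'d" using that by (simp add: vec_eq_iff)
    then show ?case using A by auto
  next
    case (insert k K)
    show ?case
    proof (intro allI impI)
      fix as and y :: "real^'d" assume sE: "set as \<subseteq> E" and yc: "\<forall>j. j \<notin> insert k K \<longrightarrow> y$j = 0"
      define w where "w = axis k (1::real)"
      define y0 where "y0 = y - (y$k) *\<^sub>R w"
      have y0c: "\<forall>j. j \<notin> K \<longrightarrow> y0$j = 0" using yc by (auto simp: y0_def w_def axis_def)
      define g where "g = dderivs as f"
      have smg: "smooth g" unfolding g_def by (rule smooth_dderivs[OF sm])
      have g1: "dderivs (replicate r w) g = (\<lambda>_. 0)"
      proof -
        have "dderivs (replicate r w) g = dderivs (replicate r w @ as) f" by (simp add: g_def dderivs_append)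
        also have "\<dots> = dderivs (as @ replicate r w) f" by (rule dderivs_perm[OF sm]) simp
        also have "\<dots> = (\<lambda>_. 0)" using hr by (simp add: dderivs_append w_def)
        finally show ?thesis .
      qed
      have g2: "\<forall>i<r. dderivs (replicate i w) g y0 = 0"
      proof (intro allI impI)
        fix i
        have "set (replicate i w @ as) \<subseteq> E" using sE by (auto simp: w_def E_def)
        then have "dderivs (replicate i w @ as) f y0 = 0" using insert.IH y0c by blast
        then show "dderivs (replicate i w) g y0 = 0" by (simp add: g_def dderivs_append)
      qed
      have "g (y0 + (y$k) *\<^sub>R w) = 0" by (rule line_zero[OF smg g1 g2])
      then show "dderivs as f y = 0" by (simp add: g_def y0_def)
    qed
  qed
  have "\<forall>as. set as \<subseteq> E \<longrightarrow> (\<forall>y. (\<forall>j. j \<notin> (UNIV::'d set) \<longrightarrow> y$j = 0) \<longrightarrow> dderivs as f y = 0)"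
    by (rule P) simp
  then show ?thesis by (metis UNIV_I dderivs.simps(1) empty_subsetI list.set(1))
qed

lemma Dsp_finite:
  fixes X :: "(int ^ 'd) list" and T :: "nat set set"
  assumes spans: "span (to_real ` set X) = UNIV"
    and T_up: "\<forall>A\<in>T. \<forall>B. A \<subseteq> B \<and> B \<subseteq> {..<length X} \<longrightarrow> B \<in> T"
    and coc: "cocircuits X \<subseteq> T"
  shows "finite_rank (Dsp X T)"
proof -
  have finB: "finite {B. ibasis X B}"
    by (rule finite_subset[of _ "Pow {..<length X}"]) (auto simp: ibasis_def)
  obtain Bs where Bs: "set Bs = {B. ibasis X B}" using finite_list[OF finB] by blast
  have g: "good T Bs {}" by (rule good_all_bases[OF spans T_up coc Bs])
  define r where "r = length Bs"
  have rel: "dderivs (replicate r (axis k 1)) f = (\<lambda>_. 0)"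
    if sm: "smooth f" and f: "\<forall>A\<in>T. partial_set X A f = (\<lambda>_. 0)" for f k
  proof -
    have "dderivs (replicate r (axis k 1)) (partial_set X {} f) = (\<lambda>_. 0)"
      by (rule smooth_good[OF sm f g]) (use Bs in \<open>auto simp: r_def\<close>)
    then show ?thesis by simp
  qed
  define L where "L = {as. set as \<subseteq> range (\<lambda>k::'d. axis k (1::real)) \<and> length as \<le> CARD('d) * r}"
  show ?thesis
  proof (rule finite_rank_by_data2[of L _ "\<lambda>f as. dderivs as f 0"])
    show "finite L" unfolding L_def by (rule finite_lists_length_le) simp
    fix fs :: "(real^'d \<Rightarrow> real) list" and c
    assume fs: "set fs \<subseteq> Dsp X T" and van: "\<forall>s\<in>L. (\<Sum>i<length fs. c i * dderivs s (fs!i) 0) = 0"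
    define g where "g = (\<lambda>x. \<Sum>i<length fs. c i * (fs!i) x)"
    have smi: "\<forall>i\<in>{..<length fs}. smooth (fs!i)" using fs by (auto simp: Dsp_def dest!: nth_mem)
    have smg: "smooth g" unfolding g_def by (rule smooth_sum[OF smi])
    have gD: "\<forall>A\<in>T. partial_set X A g = (\<lambda>_. 0)"
    proof
      fix A assume A: "A \<in> T"
      have "\<forall>i<length fs. partial_set X A (fs!i) = (\<lambda>_. 0)"
        using fs A unfolding Dsp_def by (auto dest!: nth_mem)
      then show "partial_set X A g = (\<lambda>_. 0)"
        unfolding g_def partial_set_def dderivs_sum[OF smi] by (simp add: partial_set_def fun_eq_iff)
    qed
    have "g y = 0" for y
    proof (rule coord_zero[OF smg])
      show "\<forall>k. dderivs (replicate r (axis k 1)) g = (\<lambda>_. 0)" using rel[OF smg gD] by blast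
      show "\<forall>as. set as \<subseteq> range (\<lambda>k. axis k 1) \<and> length as \<le> CARD('d) * r \<longrightarrow> dderivs as g 0 = 0"
        using van unfolding L_def g_def dderivs_sum[OF smi] by auto
    qed
    then show "\<forall>x. (\<Sum>i<length fs. c i * (fs!i) x) = 0" by (simp add: g_def)
  qed
qed




lemma pow_has_deriv:
  fixes n :: "real ^ 'd"
  shows "((\<lambda>x. c * (n \<bullet> x) ^ m) has_derivative (\<lambda>h. c * (of_nat m * (n \<bullet> h) * (n \<bullet> x) ^ (m - 1)))) (at x)"
  by (auto intro!: derivative_eq_intros simp: algebra_simps)

lemma dderiv_pow:
  fixes n :: "real ^ 'd"
  shows "dderiv a (\<lambda>x. c * (n \<bullet> x) ^ m) = (\<lambda>x. (c * of_nat m * (n \<bullet> a)) * (n \<bullet> x) ^ (m - 1))"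
proof (rule ext)
  fix x
  have "(\<lambda>h. c * (of_nat m * (n \<bullet> h) * (n \<bullet> x) ^ (m - 1))) = frechet_derivative (\<lambda>x. c * (n \<bullet> x) ^ m) (at x)"
    by (rule frechet_derivative_at[OF pow_has_deriv])
  then show "dderiv a (\<lambda>x. c * (n \<bullet> x) ^ m) x = (c * of_nat m * (n \<bullet> a)) * (n \<bullet> x) ^ (m - 1)"
    unfolding dderiv_def by (metis (no_types, lifting) mult.assoc mult.commute)
qed

lemma dderivs_pow:
  fixes n :: "real ^ 'd"
  shows "\<exists>c' m'. dderivs as (\<lambda>x. c * (n \<bullet> x) ^ m) = (\<lambda>x. c' * (n \<bullet> x) ^ m')
     \<and> ((\<exists>a\<in>set as. n \<bullet> a = 0) \<longrightarrow> c' = 0)"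
proof (induction as)
  case Nil
  then show ?case by auto
next
  case (Cons a as)
  from Cons.IH obtain c' m' where cm: "dderivs as (\<lambda>x. c * (n \<bullet> x) ^ m) = (\<lambda>x. c' * (n \<bullet> x) ^ m')"
    "(\<exists>a\<in>set as. n \<bullet> a = 0) \<longrightarrow> c' = 0" by (elim exE conjE) assumption
  have "dderivs (a # as) (\<lambda>x. c * (n \<bullet> x) ^ m) = (\<lambda>x. (c' * of_nat m' * (n \<bullet> a)) * (n \<bullet> x) ^ (m' - 1))"
    using cm(1) by (simp add: dderiv_pow)
  moreover have "(\<exists>a'\<in>set (a # as). n \<bullet> a' = 0) \<longrightarrow> c' * of_nat m' * (n \<bullet> a) = 0"
    using cm(2) by auto
  ultimately show ?case by (intro exI[of _ "c' * of_nat m' * (n \<bullet> a)"] exI[of _ "m' - 1"]) simp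
qed

lemma smooth_pow:
  fixes n :: "real ^ 'd"
  shows "smooth (\<lambda>x. (n \<bullet> x) ^ k)"
  unfolding smooth_def
proof (intro allI)
  fix as x
  obtain c' m' where cm: "dderivs as (\<lambda>x. 1 * (n \<bullet> x) ^ k) = (\<lambda>x. c' * (n \<bullet> x) ^ m')"
    using dderivs_pow[of as 1 n k] by (elim exE conjE) assumption
  show "dderivs as (\<lambda>x. (n \<bullet> x) ^ k) differentiable (at x)"
    using cm pow_has_deriv[of c' n m' x] unfolding differentiable_def by auto
qed

lemma poly_coeffs_zero:
  fixes c :: "nat \<Rightarrow> real"
  assumes "\<forall>t. (\<Sum>k<N. c k * t ^ k) = 0" "i < N"
  shows "c i = 0"
proof -
  define p where "p = (\<Sum>k<N. monom (c k) k)"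
  have "poly p t = 0" for t using assms(1) by (simp add: p_def poly_sum poly_monom)
  then have "p = 0" using poly_all_0_iff_0 by blast
  then have "coeff p i = 0" by simp
  moreover have "coeff p i = c i" using assms(2) by (simp add: p_def coeff_sum coeff_monom)
  ultimately show ?thesis by simp
qed

lemma Dsp_infinite:
  fixes X :: "(int ^ 'd) list"
  assumes spans: "span (to_real ` set X) = UNIV"
    and T_sub: "T \<subseteq> Pow {..<length X}"
    and T_up: "\<forall>A\<in>T. \<forall>B. A \<subseteq> B \<and> B \<subseteq> {..<length X} \<longrightarrow> B \<in> T"
    and C: "C \<in> cocircuits X" "C \<notin> T"
  shows "\<not> finite_rank (Dsp X T)"
proof -
  obtain n i0 where d: "i0 < length X" "n \<bullet> to_real (X!i0) \<noteq> 0"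
    "\<forall>A\<in>T. \<exists>i\<in>A. n \<bullet> to_real (X!i) = 0"
    using cocircuit_data[OF spans T_sub T_up C] by blast
  define v where "v = to_real (X!i0)"
  define lv where "lv = n \<bullet> v"
  have lv: "lv \<noteq> 0" using d(2) by (simp add: lv_def v_def)
  define \<phi> where "\<phi> = (\<lambda>k::nat. \<lambda>x. (n \<bullet> x) ^ k)"
  show ?thesis
  proof (rule not_finite_rank)
    fix N
    define fs where "fs = map \<phi> [0..<N]"
    have inD: "set fs \<subseteq> Dsp X T"
    proof
      fix f assume "f \<in> set fs"
      then obtain k where f: "f = \<phi> k" by (auto simp: fs_def)
      have "\<forall>A\<in>T. partial_set X A f = (\<lambda>_. 0)"
      proof
        fix A assume A: "A \<in> T"
        have finA: "finite A" using A T_sub by (auto intro: finite_subset)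
        obtain c' m' where cm: "dderivs (map (\<lambda>i. to_real (X!i)) (sorted_list_of_set A)) (\<lambda>x. 1 * (n \<bullet> x) ^ k)
            = (\<lambda>x. c' * (n \<bullet> x) ^ m')"
          "(\<exists>a\<in>set (map (\<lambda>i. to_real (X!i)) (sorted_list_of_set A)). n \<bullet> a = 0) \<longrightarrow> c' = 0"
          using dderivs_pow[of "map (\<lambda>i. to_real (X!i)) (sorted_list_of_set A)" 1 n k] by (elim exE conjE) assumption
        have "c' = 0" using cm(2) d(3) A finA by auto
        then show "partial_set X A f = (\<lambda>_. 0)" using cm(1) by (simp add: f \<phi>_def partial_set_def)
      qed
      moreover have "smooth f" using smooth_pow by (simp add: f \<phi>_def)
      ultimately show "f \<in> Dsp X T" by (simp add: Dsp_def)
    qed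
    have "lin_indep_fun fs"
      unfolding lin_indep_fun_def
    proof (intro allI impI)
      fix c :: "nat \<Rightarrow> real" and i
      assume H: "\<forall>x. (\<Sum>j<length fs. c j * (fs!j) x) = 0" and i: "i < length fs"
      have "\<forall>t. (\<Sum>k<N. c k * t ^ k) = 0"
      proof
        fix t :: real
        have "n \<bullet> ((t / lv) *\<^sub>R v) = t" using lv by (simp add: lv_def)
        then have "(\<Sum>j<length fs. c j * (fs!j) ((t / lv) *\<^sub>R v)) = (\<Sum>k<N. c k * t ^ k)"
          by (simp add: fs_def \<phi>_def)
        then show "(\<Sum>k<N. c k * t ^ k) = 0" using H by simp
      qed
      then show "c i = 0" using i poly_coeffs_zero by (simp add: fs_def)
    qed
    moreover have "length fs = N" by (simp add: fs_def)
    ultimately show "\<exists>fs. set fs \<subseteq> Dsp X T \<and> lin_indep_fun fs \<and> length fs = N" using inD by blast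
  qed
qed



theorem lemma2p4:
  fixes X :: "(int ^ 'd) list" and T :: "nat set set"
  assumes nonzero: "\<forall>x\<in>set X. x \<noteq> 0"
    and spans: "span (to_real ` set X) = UNIV"
    and T_sub: "T \<subseteq> Pow {..<length X}"
    and T_up: "\<forall>A\<in>T. \<forall>B. A \<subseteq> B \<and> B \<subseteq> {..<length X} \<longrightarrow> B \<in> T"
  shows "(finite_rank (DM X T) \<longleftrightarrow> cocircuits X \<subseteq> T)
       \<and> (finite_rank (Dsp X T) \<longleftrightarrow> cocircuits X \<subseteq> T)"
proof (intro conjI iffI)
  show "cocircuits X \<subseteq> T \<Longrightarrow> finite_rank (DM X T)" by (rule DM_finite[OF spans T_up])
  show "cocircuits X \<subseteq> T \<Longrightarrow> finite_rank (Dsp X T)" by (rule Dsp_finite[OF spans T_up])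
  show "cocircuits X \<subseteq> T" if "finite_rank (DM X T)"
  proof (rule ccontr)
    assume "\<not> cocircuits X \<subseteq> T"
    then obtain C where "C \<in> cocircuits X" "C \<notin> T" by blast
    from DM_infinite[OF spans T_sub T_up this] that show False by blast
  qed
  show "cocircuits X \<subseteq> T" if "finite_rank (Dsp X T)"
  proof (rule ccontr)
    assume "\<not> cocircuits X \<subseteq> T"
    then obtain C where "C \<in> cocircuits X" "C \<notin> T" by blast
    from Dsp_infinite[OF spans T_sub T_up this] that show False by blast
  qed
qed

end
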